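(* Let $2s$ be a positive integer and let $f_0,f_1,\dots,f_{2s}$ be the Veronese sequence (defined in the context). Then for all $0\le k\le 2s$, $0\le j\le 2s$ and all $\xi_+\in\mathbb{C}\setminus\{0\}$, $$(f_k)_j=\frac{(2s)!}{(2s-k)!}\left(\frac{-\xi_-}{1+\xi_+\xi_-}\right)^k\sqrt{\binom{2s}{j}}\,\xi_+^j\,K_j(k;p,2s),$$ and the rank-1 Hermitian projectors $P_k=\frac{f_k f_k^\dagger}{f_k^\dagger f_k}$ have entries $$(P_k)_{ij}=\binom{2s}{k}\frac{(\xi_+\xi_-)^k}{(1+\xi_+\xi_-)^{2s}}\,\xi_+^i\xi_-^j\sqrt{\binom{2s}{i}\binom{2s}{j}}\,K_i(k;p,2s)K_j(k;p,2s),\qquad 0\le i,j\le 2s.$$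
   Context: Let $2s\in\mathbb{Z}_{>0}$. Let $\xi_+\in\mathbb{C}$, $\xi_-=\overline{\xi_+}$ (with $\xi_\pm=\xi^1\pm i\xi^2$), and set $p=\frac{\xi_+\xi_-}{1+\xi_+\xi_-}$. Let $\partial=\frac12(\partial_{\xi^1}-i\partial_{\xi^2})$ and $\bar\partial=\frac12(\partial_{\xi^1}+i\partial_{\xi^2})$. Vectors in $\mathbb{C}^{2s+1}$ have components indexed by $0,\dots,2s$. The Krawtchouk polynomials are, for integers $0\le j,k\le N$ and $0<p<1$, $K_j(k;p,N)={}_2F_1(-j,-k;-N;1/p)=\sum_{n=0}^{\min(j,k)}\frac{(-j)_n(-k)_n}{(-N)_n\,n!}p^{-n}$, where $(a)_n$ is the Pochhammer symbol; in particular $K_j(0;p,N)=1$. The Veronese sequence is defined by $(f_0)_j=\sqrt{\binom{2s}{j}}\,\xi_+^j$ for $0\le j\le 2s$, and recursively $f_{k+1}=\left(\mathbf{1}_{2s+1}-\frac{f_k f_k^\dagger}{f_k^\dagger f_k}\right)\partial f_k$ for $0\le k\le 2s-1$, where $\mathbf 1_{2s+1}$ is the identity matrix and $\dagger$ denotes conjugate transpose. *)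

theory Defs
  imports "HOL-Analysis.Analysis"
begin

definition pd1 :: "(complex \<Rightarrow> complex) \<Rightarrow> complex \<Rightarrow> complex" where
  "pd1 g z = vector_derivative (\<lambda>t::real. g (z + of_real t)) (at 0)"

definition pd2 :: "(complex \<Rightarrow> complex) \<Rightarrow> complex \<Rightarrow> complex" where
  "pd2 g z = vector_derivative (\<lambda>t::real. g (z + \<i> * of_real t)) (at 0)"

definition wirtinger :: "(complex \<Rightarrow> complex) \<Rightarrow> complex \<Rightarrow> complex" where
  "wirtinger g z = (pd1 g z - \<i> * pd2 g z) / 2"

text \<open>Veronese sequence, N = 2s; vectors in C^(N+1) are functions nat => complex,
components indexed by 0..N; xi_+ is the variable z and xi_- = cnj z.
f_(k+1) = (1 - f_k f_k^dagger / (f_k^dagger f_k)) (d f_k).\<close>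

fun veronese :: "nat \<Rightarrow> nat \<Rightarrow> complex \<Rightarrow> nat \<Rightarrow> complex" where
  "veronese N 0 z j = of_real (sqrt (real (N choose j))) * z ^ j"
| "veronese N (Suc k) z j =
     wirtinger (\<lambda>w. veronese N k w j) z
     - veronese N k z j *
       ((\<Sum>l\<le>N. cnj (veronese N k z l) * wirtinger (\<lambda>w. veronese N k w l) z)
        / (\<Sum>l\<le>N. cnj (veronese N k z l) * veronese N k z l))"

definition veronese_proj :: "nat \<Rightarrow> nat \<Rightarrow> complex \<Rightarrow> nat \<Rightarrow> nat \<Rightarrow> complex" where
  "veronese_proj N k z i j =
     veronese N k z i * cnj (veronese N k z j)
     / (\<Sum>l\<le>N. cnj (veronese N k z l) * veronese N k z l)"

definition krawtchouk :: "nat \<Rightarrow> nat \<Rightarrow> real \<Rightarrow> nat \<Rightarrow> real" where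
  "krawtchouk j k p N =
     (\<Sum>n\<le>min j k. pochhammer (- real j) n * pochhammer (- real k) n
        / (pochhammer (- real N) n * fact n) * (1 / p) ^ n)"

end

theory Submission
  imports Defs
begin


definition Wd :: "(complex \<Rightarrow> complex) \<Rightarrow> complex \<Rightarrow> complex \<Rightarrow> complex \<Rightarrow> bool" where
  "Wd g z a b \<longleftrightarrow> (g has_derivative (\<lambda>h. a * h + b * cnj h)) (at z)"

lemma hd_eq: "(f has_derivative D) F \<Longrightarrow> D = D' \<Longrightarrow> (f has_derivative D') F" by simp

lemma Wd_wirtinger:
  assumes "Wd g z a b" shows "wirtinger g z = a"
proof -
  have g: "(g has_derivative (\<lambda>h. a * h + b * cnj h)) (at z)" using assms by (simp add: Wd_def)
  have l1: "((\<lambda>t::real. z + of_real t) has_derivative (\<lambda>t. of_real t)) (at 0)"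
    by (auto intro!: derivative_eq_intros)
  have l2: "((\<lambda>t::real. z + \<i> * of_real t) has_derivative (\<lambda>t. \<i> * of_real t)) (at 0)"
    by (auto intro!: derivative_eq_intros)
  have "((\<lambda>t. g (z + of_real t)) has_derivative (\<lambda>t. a * of_real t + b * cnj (of_real t))) (at 0)"
    using has_derivative_compose[OF l1, of g "\<lambda>h. a * h + b * cnj h"] g by simp
  hence "((\<lambda>t. g (z + of_real t)) has_vector_derivative (a + b)) (at 0)"
    unfolding has_vector_derivative_def
    by (rule hd_eq) (auto simp: fun_eq_iff scaleR_conv_of_real algebra_simps)
  hence p1: "pd1 g z = a + b" unfolding pd1_def by (rule vector_derivative_at)
  have "((\<lambda>t. g (z + \<i> * of_real t)) has_derivative (\<lambda>t. a * (\<i> * of_real t) + b * cnj (\<i> * of_real t))) (at 0)"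
    using has_derivative_compose[OF l2, of g "\<lambda>h. a * h + b * cnj h"] g by simp
  hence "((\<lambda>t. g (z + \<i> * of_real t)) has_vector_derivative (\<i> * a - \<i> * b)) (at 0)"
    unfolding has_vector_derivative_def
    by (rule hd_eq) (auto simp: fun_eq_iff scaleR_conv_of_real algebra_simps)
  hence p2: "pd2 g z = \<i> * a - \<i> * b" unfolding pd2_def by (rule vector_derivative_at)
  show ?thesis unfolding wirtinger_def p1 p2 by (simp add: algebra_simps)
qed

lemma Wd_unique:
  assumes "Wd g z a b" "Wd g z a' b'" shows "a = a' \<and> b = b'"
proof -
  have "(\<lambda>h. a * h + b * cnj h) = (\<lambda>h. a' * h + b' * cnj h)"
    using assms unfolding Wd_def by (rule has_derivative_unique)
  hence e1: "a + b = a' + b'" and e2: "a * \<i> + b * cnj \<i> = a' * \<i> + b' * cnj \<i>"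
    by (metis mult.right_neutral complex_cnj_one, metis)
  from e2 have "\<i> * (a - b) = \<i> * (a' - b')" by (simp add: algebra_simps)
  hence "a - b = a' - b'" by simp
  note e3 = this
  have "a = ((a+b)+(a-b))/2" by simp
  also have "\<dots> = ((a'+b')+(a'-b'))/2" using e1 e3 by simp
  also have "\<dots> = a'" by simp
  finally have "a = a'" .
  moreover have "b = b'" using e1 \<open>a = a'\<close> by simp
  ultimately show ?thesis by simp
qed

lemma Wd_const: "Wd (\<lambda>w. c) z 0 0" unfolding Wd_def by simp
lemma Wd_id: "Wd (\<lambda>w. w) z 1 0" unfolding Wd_def by (rule hd_eq[OF has_derivative_ident]) simp
lemma Wd_cnj: "Wd (\<lambda>w. cnj w) z 0 1" unfolding Wd_def by (rule hd_eq[OF has_derivative_cnj[OF has_derivative_ident]]) simp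

lemma Wd_add: "Wd f z a1 b1 \<Longrightarrow> Wd g z a2 b2 \<Longrightarrow> Wd (\<lambda>w. f w + g w) z (a1 + a2) (b1 + b2)"
  unfolding Wd_def by (rule hd_eq, rule has_derivative_add) (auto simp: fun_eq_iff algebra_simps)
lemma Wd_diff: "Wd f z a1 b1 \<Longrightarrow> Wd g z a2 b2 \<Longrightarrow> Wd (\<lambda>w. f w - g w) z (a1 - a2) (b1 - b2)"
  unfolding Wd_def by (rule hd_eq, rule has_derivative_diff) (auto simp: fun_eq_iff algebra_simps)
lemma Wd_minus: "Wd f z a1 b1 \<Longrightarrow> Wd (\<lambda>w. - f w) z (- a1) (- b1)"
  unfolding Wd_def by (rule hd_eq, rule has_derivative_minus) (auto simp: fun_eq_iff algebra_simps)
lemma Wd_mult: "Wd f z a1 b1 \<Longrightarrow> Wd g z a2 b2 \<Longrightarrow> Wd (\<lambda>w. f w * g w) z (f z * a2 + a1 * g z) (f z * b2 + b1 * g z)"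
  unfolding Wd_def by (rule hd_eq, rule has_derivative_mult) (auto simp: fun_eq_iff algebra_simps)
lemma Wd_cmult: "Wd g z a2 b2 \<Longrightarrow> Wd (\<lambda>w. c * g w) z (c * a2) (c * b2)"
  using Wd_mult[OF Wd_const] by simp
lemma Wd_divide: "Wd f z a1 b1 \<Longrightarrow> Wd g z a2 b2 \<Longrightarrow> g z \<noteq> 0 \<Longrightarrow>
   Wd (\<lambda>w. f w / g w) z ((a1 * g z - f z * a2) / (g z)^2) ((b1 * g z - f z * b2) / (g z)^2)"
  unfolding Wd_def by (rule hd_eq, rule has_derivative_divide) (auto simp: fun_eq_iff field_simps power2_eq_square)
lemma Wd_power: "Wd f z a b \<Longrightarrow> Wd (\<lambda>w. f w ^ n) z (of_nat n * f z ^ (n - 1) * a) (of_nat n * f z ^ (n - 1) * b)"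
  unfolding Wd_def by (rule hd_eq, rule has_derivative_power) (auto simp: fun_eq_iff algebra_simps)
lemma Wd_sum: "(\<And>i. i \<in> I \<Longrightarrow> Wd (f i) z (a i) (b i)) \<Longrightarrow> Wd (\<lambda>w. \<Sum>i\<in>I. f i w) z (\<Sum>i\<in>I. a i) (\<Sum>i\<in>I. b i)"
  unfolding Wd_def by (rule hd_eq, rule has_derivative_sum) (auto simp: fun_eq_iff sum_distrib_right sum.distrib)
lemma Wd_cnjc: "Wd f z a b \<Longrightarrow> Wd (\<lambda>w. cnj (f w)) z (cnj b) (cnj a)"
  unfolding Wd_def by (rule hd_eq, rule bounded_linear.has_derivative[OF bounded_linear_cnj]) (auto simp: fun_eq_iff)
lemma Wd_cong: "Wd f z a b \<Longrightarrow> (\<And>w. f w = g w) \<Longrightarrow> a = a' \<Longrightarrow> b = b' \<Longrightarrow> Wd g z a' b'"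
  proof -
  assume "Wd f z a b" "\<And>w. f w = g w" "a = a'" "b = b'"
  moreover have "f = g" using \<open>\<And>w. f w = g w\<close> by auto
  ultimately show ?thesis by simp
qed



definition cc :: "nat \<Rightarrow> nat \<Rightarrow> complex" where "cc N j = of_real (sqrt (real (N choose j)))"
definition ff :: "nat \<Rightarrow> nat \<Rightarrow> complex" where "ff n j = of_nat (\<Prod>i<n. j - i)"
definition ee :: "nat \<Rightarrow> nat \<Rightarrow> complex \<Rightarrow> nat \<Rightarrow> complex" where "ee N n w j = cc N j * ff n j * w ^ (j - n)"
definition uu :: "complex \<Rightarrow> complex" where "uu w = - cnj w / (1 + w * cnj w)"
definition alr :: "nat \<Rightarrow> nat \<Rightarrow> nat \<Rightarrow> real" where "alr N k n = real (k choose n) * (fact (N - n) / fact (N - k))"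
definition GG :: "nat \<Rightarrow> nat \<Rightarrow> complex \<Rightarrow> nat \<Rightarrow> complex" where
  "GG N k w j = (\<Sum>n\<le>k. of_real (alr N k n) * uu w ^ (k - n) * ee N n w j)"
definition DD :: "complex \<Rightarrow> complex" where "DD w = 1 + w * cnj w"

lemma DD_real: "DD w = of_real (1 + (norm w)^2)"
  unfolding DD_def complex_norm_square[symmetric] by simp
lemma DD_nz: "DD w \<noteq> 0"
  unfolding DD_real by (metis add_pos_nonneg zero_less_one zero_le_power2 of_real_eq_0_iff less_irrefl)

lemma Wd_DD: "Wd DD z (cnj z) z"
  unfolding DD_def[abs_def] by (rule Wd_cong[OF Wd_add[OF Wd_const Wd_mult[OF Wd_id Wd_cnj]]]) auto

lemma Wd_u: "Wd uu z (uu z ^ 2) (- 1 / DD z ^ 2)"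
  using Wd_divide[OF Wd_minus[OF Wd_cnj] Wd_DD DD_nz, of z]
  by (rule Wd_cong) (auto simp: uu_def DD_def power2_eq_square field_simps DD_nz[unfolded DD_def])

lemma ff_Suc: "ff (Suc n) j = ff n j * of_nat (j - n)"
  unfolding ff_def by simp

lemma Wd_e: "Wd (\<lambda>w. ee N n w j) z (ee N (Suc n) z j) 0"
proof -
  have "Wd (\<lambda>w. (cc N j * ff n j) * w ^ (j - n)) z ((cc N j * ff n j) * (of_nat (j - n) * z ^ (j - n - 1) * 1))
     ((cc N j * ff n j) * (of_nat (j - n) * z ^ (j - n - 1) * 0))"
    by (rule Wd_cmult[OF Wd_power[OF Wd_id]])
  thus ?thesis by (rule Wd_cong) (auto simp: ee_def ff_Suc)
qed

definition Araw :: "nat \<Rightarrow> nat \<Rightarrow> complex \<Rightarrow> nat \<Rightarrow> complex" where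
  "Araw N k z j = (\<Sum>n\<le>k. of_real (alr N k n) * (of_nat (k-n) * uu z ^ (k-n-1) * uu z ^ 2 * ee N n z j + uu z ^ (k - n) * ee N (Suc n) z j))"
definition Braw :: "nat \<Rightarrow> nat \<Rightarrow> complex \<Rightarrow> nat \<Rightarrow> complex" where
  "Braw N k z j = (\<Sum>n\<le>k. of_real (alr N k n) * (of_nat (k-n) * uu z ^ (k-n-1) * (- 1 / DD z ^ 2) * ee N n z j))"

lemma Wd_G: "Wd (\<lambda>w. GG N k w j) z (Araw N k z j) (Braw N k z j)"
proof -
  have "Wd (\<lambda>w. \<Sum>n\<le>k. of_real (alr N k n) * (uu w ^ (k - n) * ee N n w j)) z
    (\<Sum>n\<le>k. of_real (alr N k n) * (uu z ^ (k - n) * ee N (Suc n) z j + (of_nat (k-n) * uu z ^ (k-n-1) * uu z ^ 2) * ee N n z j))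
    (\<Sum>n\<le>k. of_real (alr N k n) * (uu z ^ (k - n) * 0 + (of_nat (k-n) * uu z ^ (k-n-1) * (- 1 / DD z ^ 2)) * ee N n z j))"
    by (rule Wd_sum, rule Wd_cmult, rule Wd_mult[OF Wd_power[OF Wd_u] Wd_e])
  thus ?thesis
    by (rule Wd_cong) (auto simp: GG_def Araw_def Braw_def algebra_simps intro!: sum.cong)
qed



lemma absorb: "real (Suc m) * real (k choose Suc m) = (real k - real m) * real (k choose m)"
proof (cases "m \<le> k")
  case True
  have "Suc m * (k choose Suc m) = (k - m) * (k choose m)"
    by (metis binomial_absorption binomial_absorb_comp)
  hence "real (Suc m * (k choose Suc m)) = real ((k - m) * (k choose m))" by simp
  thus ?thesis using True by (simp only: of_nat_mult of_nat_diff)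
next
  case False thus ?thesis by (simp add: binomial_eq_0)
qed

lemma fact_split: "m < N \<Longrightarrow> (fact (N - m) :: real) = real (N - m) * fact (N - Suc m)"
  by (metis Suc_diff_Suc fact_Suc of_nat_Suc)

lemma coefA:
  assumes "k < N" "n \<le> Suc k"
  shows "alr N k n * real (k - n) + (if n = 0 then 0 else alr N k (n-1)) = alr N (Suc k) n + (2*real k - real N) * alr N k n"
proof (cases n)
  case 0
  have f: "(fact (N - k) :: real) = real (N - k) * fact (N - Suc k)" using fact_split assms by blast
  have p: "(fact (N - Suc k) :: real) > 0" by simp
  have "real (N - k) = real N - real k" using assms by simp
  then show ?thesis using 0 p assms unfolding alr_def f
    by (simp add: field_simps)
next
  case (Suc m)
  have f1: "(fact (N - k) :: real) = real (N - k) * fact (N - Suc k)" using fact_split assms by blast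
  have f2: "(fact (N - m) :: real) = real (N - m) * fact (N - Suc m)" using fact_split assms Suc by simp
  have p: "(fact (N - Suc k) :: real) > 0" by simp
  have nk: "real (N - k) = real N - real k" "real (N - m) = real N - real m" using assms Suc by auto
  have ab: "real (Suc m) * real (k choose Suc m) = (real k - real m) * real (k choose m)" by (rule absorb)
  have c: "real (Suc k choose Suc m) = real (k choose m) + real (k choose Suc m)" by simp
  have km: "real (k choose Suc m) * real (k - Suc m) = real (k choose Suc m) * (real k - real m - 1)"
  proof (cases "Suc m \<le> k")
    case True thus ?thesis by (simp add: of_nat_diff)
  next
    case False thus ?thesis by simp
  qed
  define F :: real where "F = fact (N - Suc m)"
  define B :: real where "B = fact (N - Suc k)"
  have FB: "F > 0" "B > 0" unfolding F_def B_def by auto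
  have nz: "real N - real k \<noteq> 0" using assms by simp
  have key: "real (k choose Suc m) * (real k - real m - 1) + real (k choose m) * (real N - real m)
     = real (Suc k choose Suc m) * (real N - real k) + (2*real k - real N) * real (k choose Suc m)"
    using ab c by (simp add: algebra_simps)
  define Q where "Q = F / ((real N - real k) * B)"
  have a1: "alr N k (Suc m) = real (k choose Suc m) * Q"
    unfolding alr_def Q_def f1 F_def[symmetric] B_def[symmetric] nk by simp
  have a2: "alr N k m = real (k choose m) * (real N - real m) * Q"
    unfolding alr_def Q_def f1 f2 F_def[symmetric] B_def[symmetric] nk by simp
  have a3: "alr N (Suc k) (Suc m) = real (Suc k choose Suc m) * (real N - real k) * Q"
    unfolding alr_def Q_def F_def[symmetric] B_def[symmetric] using nz FB by (simp add: field_simps)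
  have "alr N k (Suc m) * real (k - Suc m) + alr N k m = alr N (Suc k) (Suc m) + (2*real k - real N) * alr N k (Suc m)"
    unfolding a1 a2 a3 using key km by algebra
  thus ?thesis using Suc by simp
qed

lemma coefB:
  assumes "Suc k \<le> N" "n \<le> k"
  shows "alr N (Suc k) n * real (Suc k - n) = real (Suc k) * real (N - k) * alr N k n"
proof -
  have f1: "(fact (N - k) :: real) = real (N - k) * fact (N - Suc k)" using fact_split assms by simp
  have p: "(fact (N - Suc k) :: real) > 0" by simp
  have "(Suc k - n) * (Suc k choose n) = Suc k * (k choose n)"
    by (metis binomial_absorb_comp diff_Suc_1)
  hence b: "real (Suc k choose n) * real (Suc k - n) = real (Suc k) * real (k choose n)"
    by (metis of_nat_mult mult.commute)
  have nz: "real (N - k) \<noteq> 0" using assms by simp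
  show ?thesis unfolding alr_def f1 using p nz b by (simp add: field_simps)
qed



lemma pow_aux: "of_nat m * (x::complex) ^ (m - 1) * x ^ 2 = of_nat m * x ^ Suc m"
proof (cases m)
  case 0 thus ?thesis by simp
next
  case (Suc m') 
  have "x ^ (m - 1) * x ^ 2 = x ^ Suc m" unfolding power_add[symmetric] using Suc by simp
  thus ?thesis by (simp add: mult.assoc)
qed

lemma S1aux: "of_real (a * real m) * (x::complex) ^ Suc m * e = of_real a * (of_nat m * x ^ (m - 1) * x ^ 2 * e)"
proof -
  have "of_nat m * x ^ (m - 1) * x ^ 2 * e = of_nat m * x ^ Suc m * e" by (simp only: pow_aux)
  hence "of_real a * (of_nat m * x ^ (m - 1) * x ^ 2 * e) = of_real a * (of_nat m * x ^ Suc m * e)" by (rule arg_cong)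
  also have "\<dots> = of_real (a * real m) * x ^ Suc m * e" by (simp only: of_real_mult of_real_of_nat_eq mult_ac)
  finally show ?thesis by (rule sym)
qed

lemma alr_top: "alr N k (Suc k) = 0" unfolding alr_def by simp

lemma A_eq:
  assumes "k < N"
  shows "Araw N k z j = GG N (Suc k) z j + (2 * of_nat k - of_nat N) * uu z * GG N k z j"
proof -
  let ?u = "uu z" and ?E = "\<lambda>n. ee N n z j"
  have S1: "(\<Sum>n\<le>k. of_real (alr N k n) * (of_nat (k-n) * ?u ^ (k-n-1) * ?u ^ 2 * ?E n))
     = (\<Sum>n\<le>Suc k. of_real (alr N k n * real (k-n)) * ?u ^ (Suc k - n) * ?E n)"
  proof -
    have "(\<Sum>n\<le>Suc k. of_real (alr N k n * real (k-n)) * ?u ^ (Suc k - n) * ?E n)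
       = (\<Sum>n\<le>k. of_real (alr N k n * real (k-n)) * ?u ^ (Suc k - n) * ?E n)"
      by (simp add: alr_top)
    also have "\<dots> = (\<Sum>n\<le>k. of_real (alr N k n) * (of_nat (k-n) * ?u ^ (k-n-1) * ?u ^ 2 * ?E n))"
    proof (rule sum.cong[OF refl])
      fix n assume "n \<in> {..k}"
      hence "Suc k - n = Suc (k - n)" by (simp add: Suc_diff_le)
      thus "of_real (alr N k n * real (k-n)) * ?u ^ (Suc k - n) * ?E n = of_real (alr N k n) * (of_nat (k-n) * ?u ^ (k-n-1) * ?u ^ 2 * ?E n)"
        using S1aux[of "alr N k n" "k - n" ?u "?E n"] by simp
    qed
    finally show ?thesis by simp
  qed
  have S2: "(\<Sum>n\<le>k. of_real (alr N k n) * (?u ^ (k-n) * ?E (Suc n)))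
     = (\<Sum>n\<le>Suc k. of_real (if n = 0 then 0 else alr N k (n-1)) * ?u ^ (Suc k - n) * ?E n)"
    by (subst sum.atMost_Suc_shift) (simp add: algebra_simps)
  have S4: "(2 * of_nat k - of_nat N) * ?u * GG N k z j
     = (\<Sum>n\<le>Suc k. of_real ((2 * real k - real N) * alr N k n) * ?u ^ (Suc k - n) * ?E n)"
  proof -
    have "(2 * of_nat k - of_nat N) * ?u * GG N k z j = (\<Sum>n\<le>k. of_real ((2 * real k - real N) * alr N k n) * ?u ^ (Suc k - n) * ?E n)"
      unfolding GG_def sum_distrib_left
    proof (rule sum.cong[OF refl])
      fix n assume "n \<in> {..k}"
      hence "Suc k - n = Suc (k - n)" by (simp add: Suc_diff_le)
      thus "(2 * of_nat k - of_nat N) * ?u * (of_real (alr N k n) * ?u ^ (k - n) * ?E n) = of_real ((2 * real k - real N) * alr N k n) * ?u ^ (Suc k - n) * ?E n"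
        by (simp add: algebra_simps)
    qed
    also have "\<dots> = (\<Sum>n\<le>Suc k. of_real ((2 * real k - real N) * alr N k n) * ?u ^ (Suc k - n) * ?E n)"
      by (simp add: alr_top)
    finally show ?thesis .
  qed
  have "Araw N k z j = (\<Sum>n\<le>Suc k. of_real (alr N k n * real (k-n)) * ?u ^ (Suc k - n) * ?E n)
      + (\<Sum>n\<le>Suc k. of_real (if n = 0 then 0 else alr N k (n-1)) * ?u ^ (Suc k - n) * ?E n)"
    unfolding Araw_def S1[symmetric] S2[symmetric] sum.distrib[symmetric] by (simp add: algebra_simps)
  also have "\<dots> = (\<Sum>n\<le>Suc k. of_real (alr N k n * real (k-n) + (if n = 0 then 0 else alr N k (n-1))) * ?u ^ (Suc k - n) * ?E n)"
    unfolding sum.distrib[symmetric] by (simp add: algebra_simps)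
  also have "\<dots> = (\<Sum>n\<le>Suc k. of_real (alr N (Suc k) n + (2 * real k - real N) * alr N k n) * ?u ^ (Suc k - n) * ?E n)"
    by (rule sum.cong[OF refl]) (simp only: coefA[OF assms] atMost_iff)
  also have "\<dots> = (\<Sum>n\<le>Suc k. of_real (alr N (Suc k) n) * ?u ^ (Suc k - n) * ?E n) + (\<Sum>n\<le>Suc k. of_real ((2 * real k - real N) * alr N k n) * ?u ^ (Suc k - n) * ?E n)"
    by (simp only: of_real_add distrib_right sum.distrib)
  also have "\<dots> = GG N (Suc k) z j + (2 * of_nat k - of_nat N) * uu z * GG N k z j"
    by (subst S4) (simp only: GG_def)
  finally show ?thesis .
qed

lemma B_eq0: "Braw N 0 z j = 0" unfolding Braw_def by simp

lemma B_eqS: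
  assumes "Suc k \<le> N"
  shows "Braw N (Suc k) z j = of_nat (Suc k) * of_nat (N - k) * (-1 / DD z ^ 2) * GG N k z j"
proof -
  let ?u = "uu z" and ?E = "\<lambda>n. ee N n z j"
  have "Braw N (Suc k) z j = (\<Sum>n\<le>k. of_real (alr N (Suc k) n) * (of_nat (Suc k-n) * ?u ^ (Suc k-n-1) * (- 1 / DD z ^ 2) * ?E n))"
    unfolding Braw_def by simp
  also have "\<dots> = (\<Sum>n\<le>k. of_nat (Suc k) * of_nat (N - k) * (-1 / DD z ^ 2) * (of_real (alr N k n) * ?u ^ (k - n) * ?E n))"
  proof (rule sum.cong[OF refl])
    fix n assume n: "n \<in> {..k}"
    have c: "of_real (alr N (Suc k) n) * (of_nat (Suc k - n) :: complex) = of_nat (Suc k) * of_nat (N - k) * of_real (alr N k n)"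
      using arg_cong[OF coefB[OF assms, of n], of "of_real :: real \<Rightarrow> complex"] n by simp
    have e: "Suc k - n - 1 = k - n" by simp
    have "of_real (alr N (Suc k) n) * (of_nat (Suc k-n) * ?u ^ (Suc k-n-1) * (- 1 / DD z ^ 2) * ?E n)
      = (of_real (alr N (Suc k) n) * of_nat (Suc k - n)) * (?u ^ (k-n) * (- 1 / DD z ^ 2) * ?E n)"
      unfolding e by (simp only: mult_ac)
    also have "\<dots> = (of_nat (Suc k) * of_nat (N - k) * of_real (alr N k n)) * (?u ^ (k-n) * (- 1 / DD z ^ 2) * ?E n)"
      unfolding c ..
    also have "\<dots> = of_nat (Suc k) * of_nat (N - k) * (-1 / DD z ^ 2) * (of_real (alr N k n) * ?u ^ (k - n) * ?E n)"
      by (simp only: mult_ac)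
    finally show "of_real (alr N (Suc k) n) * (of_nat (Suc k-n) * ?u ^ (Suc k-n-1) * (- 1 / DD z ^ 2) * ?E n) = of_nat (Suc k) * of_nat (N - k) * (-1 / DD z ^ 2) * (of_real (alr N k n) * ?u ^ (k - n) * ?E n)" .
  qed
  also have "\<dots> = of_nat (Suc k) * of_nat (N - k) * (-1 / DD z ^ 2) * GG N k z j"
    unfolding GG_def sum_distrib_left ..
  finally show ?thesis .
qed



definition ip :: "nat \<Rightarrow> nat \<Rightarrow> nat \<Rightarrow> complex \<Rightarrow> complex" where
  "ip N m k w = (\<Sum>l\<le>N. cnj (GG N m w l) * GG N k w l)"
definition nn :: "nat \<Rightarrow> nat \<Rightarrow> complex \<Rightarrow> complex" where
  "nn N k w = of_real (fact k * fact N / fact (N - k)) * DD w ^ N / DD w ^ (2 * k)"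
definition aa :: "nat \<Rightarrow> nat \<Rightarrow> complex \<Rightarrow> complex" where
  "aa N k z = (2 * of_nat k - of_nat N) * uu z"

lemma Wd_ip: "Wd (\<lambda>w. ip N m k w) z
   (\<Sum>l\<le>N. cnj (GG N m z l) * Araw N k z l + cnj (Braw N m z l) * GG N k z l)
   (\<Sum>l\<le>N. cnj (GG N m z l) * Braw N k z l + cnj (Araw N m z l) * GG N k z l)"
  unfolding ip_def[abs_def]
  by (rule Wd_sum, rule Wd_mult[OF Wd_cnjc[OF Wd_G] Wd_G])

lemma Wd_zero: "Wd f z a b \<Longrightarrow> (\<And>w. f w = 0) \<Longrightarrow> a = 0"
  using Wd_unique[of f z a b 0 0] Wd_cong[OF Wd_const[of 0 z], of f] by auto

lemma ip_cnj: "ip N k m w = cnj (ip N m k w)"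
  unfolding ip_def by (simp add: mult.commute)

lemma cnj_DD: "cnj (DD w) = DD w" unfolding DD_def by simp

lemma powm1: "of_nat n * (x::complex) ^ (n - 1) = of_nat n * x ^ n / x" if "x \<noteq> 0"
  using that by (cases n) auto

lemma Wd_nn: "\<exists>b. Wd (\<lambda>w. nn N k w) z (aa N k z * nn N k z) b"
proof -
  let ?c = "of_real (fact k * fact N / fact (N - k)) :: complex"
  have D: "DD z \<noteq> 0" by (rule DD_nz)
  have W: "Wd (\<lambda>w. ?c * (DD w ^ N / DD w ^ (2 * k))) z
     (?c * (((of_nat N * DD z ^ (N - 1) * cnj z) * DD z ^ (2 * k) - DD z ^ N * (of_nat (2 * k) * DD z ^ (2 * k - 1) * cnj z)) / (DD z ^ (2 * k))^2))
     (?c * (((of_nat N * DD z ^ (N - 1) * z) * DD z ^ (2 * k) - DD z ^ N * (of_nat (2 * k) * DD z ^ (2 * k - 1) * z)) / (DD z ^ (2 * k))^2))"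
    by (rule Wd_cmult, rule Wd_divide[OF Wd_power[OF Wd_DD] Wd_power[OF Wd_DD]]) (simp add: D)
  have "?c * (((of_nat N * DD z ^ (N - 1) * cnj z) * DD z ^ (2 * k) - DD z ^ N * (of_nat (2 * k) * DD z ^ (2 * k - 1) * cnj z)) / (DD z ^ (2 * k))^2)
     = ?c * (((of_nat N * DD z ^ N / DD z * cnj z) * DD z ^ (2 * k) - DD z ^ N * (of_nat (2 * k) * DD z ^ (2 * k) / DD z * cnj z)) / (DD z ^ (2 * k))^2)"
    using powm1[OF D, of N] powm1[OF D, of "2 * k"] by (simp add: mult.assoc)
  also have "\<dots> = aa N k z * nn N k z"
    unfolding aa_def nn_def uu_def DD_def[symmetric] using D
    by (simp add: field_simps power2_eq_square)
  finally show ?thesis using W by (intro exI) (rule Wd_cong, auto simp: nn_def)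
qed



definition SA where "SA N m k z = (\<Sum>l\<le>N. cnj (GG N m z l) * Araw N k z l)"
definition SB where "SB N m k z = (\<Sum>l\<le>N. cnj (Braw N m z l) * GG N k z l)"

lemma ipS: "k < N \<Longrightarrow> ip N m (Suc k) z = SA N m k z - aa N k z * ip N m k z"
  unfolding ip_def SA_def aa_def sum_distrib_left sum_subtractf[symmetric]
  by (rule sum.cong) (auto simp: A_eq algebra_simps)

lemma SB0: "SB N 0 k z = 0" unfolding SB_def by (simp add: B_eq0)
lemma SBS: "Suc m \<le> N \<Longrightarrow> SB N (Suc m) k z = cnj (of_nat (Suc m) * of_nat (N - m) * (-1 / DD z ^ 2)) * ip N m k z"
  unfolding SB_def ip_def sum_distrib_left
  by (rule sum.cong) (auto simp: B_eqS mult.assoc)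

lemma dzero: "(\<And>w. ip N m k w = 0) \<Longrightarrow> SA N m k z + SB N m k z = 0"
  using Wd_zero[OF Wd_ip, of N m k z] unfolding SA_def SB_def sum.distrib by simp

lemma deq: assumes "\<And>w. ip N k k w = nn N k w" shows "SA N k k z + SB N k k z = aa N k z * nn N k z"
proof -
  obtain b where b: "Wd (\<lambda>w. nn N k w) z (aa N k z * nn N k z) b" using Wd_nn by blast
  have "Wd (\<lambda>w. nn N k w) z (SA N k k z + SB N k k z) (\<Sum>l\<le>N. cnj (GG N k z l) * Braw N k z l + cnj (Araw N k z l) * GG N k z l)"
    by (rule Wd_cong[OF Wd_ip[of N k k z]]) (auto simp: assms SA_def SB_def sum.distrib)
  thus ?thesis using Wd_unique[OF b] by metis
qed

lemma cnj_db: "cnj (- 1 / DD z ^ 2) = - 1 / DD z ^ 2" by (simp add: cnj_DD)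

lemma nn_Suc: "Suc k \<le> N \<Longrightarrow> nn N (Suc k) z = of_nat (Suc k) * of_nat (N - k) / DD z ^ 2 * nn N k z"
proof -
  assume a: "Suc k \<le> N"
  have f: "(fact (N - k) :: real) = real (N - k) * fact (N - Suc k)" using fact_split a by simp
  have p: "(fact (N - Suc k) :: real) > 0" by simp
  have nz: "real (N - k) \<noteq> 0" using a by simp
  have r: "fact (Suc k) * fact N / fact (N - Suc k) = real (Suc k) * real (N - k) * (fact k * fact N / fact (N - k))"
    unfolding f using p nz by (simp add: field_simps)
  have D: "DD z ^ (2 * Suc k) = DD z ^ (2 * k) * DD z ^ 2" by (simp add: power_add[symmetric])
  show ?thesis unfolding nn_def r D of_real_mult of_real_of_nat_eq using DD_nz[of z] by (simp add: field_simps)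
qed

lemma ip00: "ip N 0 0 w = nn N 0 w"
proof -
  have g: "GG N 0 w l = cc N l * w ^ l" for l unfolding GG_def alr_def ee_def ff_def by simp
  have sq: "complex_of_real (sqrt (real c)) * complex_of_real (sqrt (real c)) = of_nat c" for c
    by (simp flip: of_real_mult)
  have "ip N 0 0 w = (\<Sum>l\<le>N. of_nat (N choose l) * (w * cnj w) ^ l * 1 ^ (N - l))"
    unfolding ip_def g cc_def by (intro sum.cong) (auto simp: power_mult_distrib sq mult_ac)
  also have "\<dots> = (w * cnj w + 1) ^ N" by (rule binomial_ring[symmetric])
  finally show ?thesis unfolding nn_def DD_def by (simp add: add.commute)
qed

lemma mainH: "k \<le> N \<Longrightarrow> (\<forall>w m. m < k \<longrightarrow> ip N m k w = 0) \<and> (\<forall>w. ip N k k w = nn N k w)"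
proof (induction k)
  case 0 thus ?case using ip00 by simp
next
  case (Suc k)
  hence kN: "k < N" and IH1: "\<And>w m. m < k \<Longrightarrow> ip N m k w = 0" and IH2: "\<And>w. ip N k k w = nn N k w" by auto
  have SBz: "SB N m k z = 0" if "m \<le> k" for m z
  proof (cases m)
    case 0 thus ?thesis by (simp add: SB0)
  next
    case (Suc m') thus ?thesis using that kN by (simp add: SBS IH1)
  qed
  have O: "ip N m (Suc k) w = 0" if "m \<le> k" for m w
  proof (cases "m = k")
    case True
    have "ip N k (Suc k) w = SA N k k w - aa N k w * nn N k w" using ipS[OF kN] IH2 by simp
    also have "\<dots> = - SB N k k w" using deq[OF IH2, of w] by (simp add: algebra_simps)
    finally show ?thesis using True SBz by simp
  next
    case False
    hence "m < k" using that by simp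
    hence "ip N m (Suc k) w = SA N m k w" using ipS[OF kN] IH1 by simp
    also have "\<dots> = - SB N m k w" using dzero[OF IH1[OF \<open>m < k\<close>], of w] by (simp add: eq_neg_iff_add_eq_0)
    finally show ?thesis using that SBz by simp
  qed
  have O2: "ip N (Suc k) k w = 0" for w using O[of k w] ip_cnj[of N "Suc k" k w] by simp
  have "ip N (Suc k) (Suc k) w = nn N (Suc k) w" for w
  proof -
    have "ip N (Suc k) (Suc k) w = SA N (Suc k) k w" using ipS[OF kN] O2 by simp
    also have "\<dots> = - SB N (Suc k) k w" using dzero[OF O2, of w] by (simp add: eq_neg_iff_add_eq_0)
    also have "\<dots> = of_nat (Suc k) * of_nat (N - k) / DD w ^ 2 * nn N k w"
      using Suc.prems by (simp add: SBS IH2 cnj_db cnj_DD)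
    also have "\<dots> = nn N (Suc k) w" using nn_Suc[OF Suc.prems] by simp
    finally show ?thesis .
  qed
  thus ?case using O by (auto simp: less_Suc_eq_le)
qed

lemma nn_nz: "nn N k w \<noteq> 0"
  unfolding nn_def using DD_nz[of w] by simp

lemma veronese_GG: "k \<le> N \<Longrightarrow> veronese N k w j = GG N k w j"
proof (induction k arbitrary: w j)
  case 0 thus ?case unfolding GG_def alr_def ee_def ff_def cc_def by simp
next
  case (Suc k)
  hence kN: "k < N" by simp
  have IH: "\<And>w j. veronese N k w j = GG N k w j" using Suc by simp
  have ext1: "(\<lambda>w. veronese N k w l) = (\<lambda>w. GG N k w l)" for l using IH by simp
  have wr: "wirtinger (\<lambda>w. veronese N k w l) z = GG N (Suc k) z l + aa N k z * GG N k z l" for l z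
    unfolding ext1 using Wd_wirtinger[OF Wd_G] A_eq[OF kN] by (simp add: aa_def)
  have wr2: "wirtinger (\<lambda>w. GG N k w l) z = GG N (Suc k) z l + aa N k z * GG N k z l" for l z
    using wr[of l z] unfolding ext1 .
  have H: "ip N k (Suc k) w = 0" "ip N k k w = nn N k w"
    using mainH[of "Suc k" N] mainH[of k N] Suc.prems by auto
  have num: "(\<Sum>l\<le>N. cnj (veronese N k w l) * wirtinger (\<lambda>w. veronese N k w l) w) = aa N k w * nn N k w"
  proof -
    have "(\<Sum>l\<le>N. cnj (veronese N k w l) * wirtinger (\<lambda>w. veronese N k w l) w) = ip N k (Suc k) w + aa N k w * ip N k k w"
      unfolding IH wr2 ip_def sum_distrib_left sum.distrib[symmetric] by (rule sum.cong) (auto simp: algebra_simps)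
    thus ?thesis using H by simp
  qed
  have den: "(\<Sum>l\<le>N. cnj (veronese N k w l) * veronese N k w l) = nn N k w"
    using H unfolding IH ip_def by simp
  show ?case
    unfolding veronese.simps num den unfolding wr using nn_nz[of N k w] by (simp add: IH)
qed



definition ffp :: "nat \<Rightarrow> nat \<Rightarrow> nat" where "ffp n j = (\<Prod>i<n. j - i)"

lemma ffp_zero: "j < n \<Longrightarrow> ffp n j = 0"
  unfolding ffp_def by (rule prod_zero) (auto intro!: bexI[of _ j])

lemma poch_neg: "pochhammer (- real j) n = (-1)^n * real (ffp n j)"
proof (induction n)
  case 0 thus ?case by (simp add: ffp_def)
next
  case (Suc n)
  show ?case
  proof (cases "n \<le> j")
    case True
    thus ?thesis using Suc by (simp add: pochhammer_Suc ffp_def of_nat_diff algebra_simps)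
  next
    case False
    hence "ffp n j = 0" "ffp (Suc n) j = 0" by (auto intro: ffp_zero)
    thus ?thesis using Suc by (simp add: pochhammer_Suc)
  qed
qed

lemma ffp_fact: "n \<le> k \<Longrightarrow> real (ffp n k) * fact (k - n) = fact k"
proof (induction n)
  case 0 thus ?case by (simp add: ffp_def)
next
  case (Suc n)
  have f: "(fact (k - n) :: real) = real (k - n) * fact (k - Suc n)" using fact_split Suc.prems by simp
  have "real (ffp (Suc n) k) * fact (k - Suc n) = real (ffp n k) * (real (k - n) * fact (k - Suc n))"
    by (simp add: ffp_def)
  also have "\<dots> = real (ffp n k) * fact (k - n)" by (simp only: f)
  also have "\<dots> = fact k" using Suc by simp
  finally show ?case .
qed

lemma K1:
  assumes "n \<le> k" "k \<le> N"
  shows "fact N / fact (N - k) * (pochhammer (- real j) n * pochhammer (- real k) n / (pochhammer (- real N) n * fact n))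
     = (-1)^n * real (ffp n j) * alr N k n"
proof -
  have a: "real (ffp n k) = fact k / fact (k - n)" using ffp_fact[of n k] assms by (simp add: field_simps)
  have b: "real (ffp n N) = fact N / fact (N - n)" using ffp_fact[of n N] assms by (simp add: field_simps)
  have c: "real (k choose n) = fact k / (fact n * fact (k - n))" using assms by (simp add: binomial_fact)
  show ?thesis unfolding poch_neg a b alr_def c
    by (simp add: field_simps power_mult_distrib[symmetric])
qed

lemma GG_closed:
  assumes z: "z \<noteq> 0" and kN: "k \<le> N" and jN: "j \<le> N" and p: "p = Re (z * cnj z) / (1 + Re (z * cnj z))"
  shows "GG N k z j = of_real (fact N / fact (N - k)) * (- cnj z / (1 + z * cnj z)) ^ k
     * of_real (sqrt (real (N choose j))) * z ^ j * of_real (krawtchouk j k p N)"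
proof -
  define q where "q = Re (z * cnj z)"
  have zc: "z * cnj z = of_real q" unfolding q_def complex_norm_square[symmetric] by simp
  have q0: "q > 0" using z unfolding q_def complex_norm_square[symmetric] by simp
  have pq: "p = q / (1 + q)" using p q_def by simp
  have p0: "p > 0" using q0 pq by simp
  have uz: "uu z * z = - of_real p"
    unfolding uu_def pq using zc q0 by (simp add: field_simps)
  let ?T = "\<lambda>n. pochhammer (- real j) n * pochhammer (- real k) n / (pochhammer (- real N) n * fact n) * (1 / p) ^ n"
  have kr: "krawtchouk j k p N = (\<Sum>n\<le>k. ?T n)"
    unfolding krawtchouk_def
    by (rule sum.mono_neutral_left) (auto simp: poch_neg ffp_zero)
  have "GG N k z j = (\<Sum>n\<le>k. of_real (fact N / fact (N - k)) * uu z ^ k * cc N j * z ^ j * of_real (?T n))"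
    unfolding GG_def
  proof (rule sum.cong[OF refl])
    fix n assume "n \<in> {..k}"
    hence nk: "n \<le> k" by simp
    show "of_real (alr N k n) * uu z ^ (k - n) * ee N n z j = of_real (fact N / fact (N - k)) * uu z ^ k * cc N j * z ^ j * of_real (?T n)"
    proof (cases "n \<le> j")
      case False
      hence "ffp n j = 0" by (simp add: ffp_zero)
      hence "ff n j = 0" unfolding ff_def ffp_def by simp
      thus ?thesis using False by (simp add: ee_def poch_neg ffp_zero)
    next
      case True
      have t: "of_real (fact N / fact (N - k)) * of_real (?T n) = (of_real ((-1)^n * real (ffp n j) * alr N k n) * of_real (1 / p) ^ n :: complex)"
      proof -
        have "fact N / fact (N - k) * ?T n = (fact N / fact (N - k) * (pochhammer (- real j) n * pochhammer (- real k) n / (pochhammer (- real N) n * fact n))) * (1/p)^n"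
          by (simp only: mult.assoc)
        also have "\<dots> = ((-1)^n * real (ffp n j) * alr N k n) * (1/p)^n" unfolding K1[OF nk kN, of j] ..
        finally have tr: "fact N / fact (N - k) * ?T n = ((-1)^n * real (ffp n j) * alr N k n) * (1/p)^n" .
        show ?thesis by (simp only: of_real_mult[symmetric] of_real_power[symmetric] tr)
      qed
      have br: "((- 1) * (1 / of_real p) * (uu z * z)) ^ n = (1::complex)" using uz p0 by simp
      have pk: "uu z ^ k = uu z ^ (k - n) * uu z ^ n" using nk by (simp flip: power_add)
      have pj: "z ^ j = z ^ (j - n) * z ^ n" using True by (simp flip: power_add)
      have "of_real (fact N / fact (N - k)) * uu z ^ k * cc N j * z ^ j * of_real (?T n)
        = (of_real (fact N / fact (N - k)) * of_real (?T n)) * uu z ^ k * cc N j * z ^ j" by (simp only: mult_ac)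
      also have "\<dots> = of_real (alr N k n) * uu z ^ (k - n) * (cc N j * of_nat (ffp n j) * z ^ (j - n)) * ((- 1) * (1 / of_real p) * (uu z * z)) ^ n"
        unfolding t pk pj power_mult_distrib by (simp add: mult_ac)
      also have "\<dots> = of_real (alr N k n) * uu z ^ (k - n) * ee N n z j"
        unfolding br ee_def ff_def ffp_def by simp
      finally show ?thesis by (rule sym)
    qed
  qed
  also have "\<dots> = of_real (fact N / fact (N - k)) * uu z ^ k * cc N j * z ^ j * of_real (krawtchouk j k p N)"
    unfolding kr of_real_sum sum_distrib_left ..
  finally show ?thesis unfolding uu_def cc_def .
qed

lemma proj_closed:
  assumes z: "z \<noteq> 0" and kN: "k \<le> N" and iN: "i \<le> N" and jN: "j \<le> N" and p: "p = Re (z * cnj z) / (1 + Re (z * cnj z))"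
  shows "veronese_proj N k z i j =
              of_nat (N choose k) * (z * cnj z) ^ k / (1 + z * cnj z) ^ N
              * z ^ i * cnj z ^ j * of_real (sqrt (real (N choose i) * real (N choose j)))
              * of_real (krawtchouk i k p N) * of_real (krawtchouk j k p N)"
proof -
  define A :: complex where "A = of_real (fact N / fact (N - k))"
  define U where "U = - cnj z / (1 + z * cnj z)"
  define D where "D = 1 + z * cnj z"
  define c :: complex where "c = of_real (fact k * fact N / fact (N - k))"
  define Ki :: complex where "Ki = of_real (krawtchouk i k p N)"
  define Kj :: complex where "Kj = of_real (krawtchouk j k p N)"
  define si :: complex where "si = of_real (sqrt (real (N choose i)))"
  define sj :: complex where "sj = of_real (sqrt (real (N choose j)))"
  have D0: "D \<noteq> 0" using DD_nz[of z] unfolding D_def DD_def .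
  have cnjD: "cnj D = D" using cnj_DD[of z] unfolding D_def DD_def .
  have c0: "c \<noteq> 0" unfolding c_def by simp
  have den: "(\<Sum>l\<le>N. cnj (veronese N k z l) * veronese N k z l) = c * D ^ N / D ^ (2 * k)"
    using mainH[OF kN] veronese_GG[OF kN] unfolding ip_def nn_def c_def D_def DD_def by simp
  have gi: "veronese N k z i = A * U ^ k * si * z ^ i * Ki"
    unfolding veronese_GG[OF kN] GG_closed[OF z kN iN p] A_def U_def si_def Ki_def ..
  have gj: "cnj (veronese N k z j) = A * cnj U ^ k * sj * cnj z ^ j * Kj"
    unfolding veronese_GG[OF kN] GG_closed[OF z kN jN p] A_def U_def sj_def Kj_def by simp
  have h1: "U * cnj U = z * cnj z / D ^ 2"
    unfolding U_def D_def using D0[unfolded D_def] cnjD[unfolded D_def] by (simp add: field_simps power2_eq_square)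
  have h2: "A * A / c = of_nat (N choose k)"
  proof -
    have "(fact N / fact (N - k)) * (fact N / fact (N - k)) / (fact k * fact N / fact (N - k)) = (fact N / (fact k * fact (N - k)) :: real)"
      by (simp add: field_simps)
    also have "\<dots> = real (N choose k)" using kN by (simp add: binomial_fact)
    finally show ?thesis unfolding A_def c_def by (metis of_real_mult of_real_divide of_real_of_nat_eq)
  qed
  have h3: "si * sj = of_real (sqrt (real (N choose i) * real (N choose j)))"
    unfolding si_def sj_def by (simp add: real_sqrt_mult)
  have h4: "(U * cnj U) ^ k * D ^ (2 * k) = (z * cnj z) ^ k"
  proof -
    have e: "(D ^ k)\<^sup>2 = (D\<^sup>2) ^ k" by (metis power_mult power_mult_distrib mult.commute)
    show ?thesis unfolding h1 using D0 e by (simp add: power_mult power_divide field_simps)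
  qed
  have "veronese_proj N k z i j = (A * U ^ k * si * z ^ i * Ki) * (A * cnj U ^ k * sj * cnj z ^ j * Kj) / (c * D ^ N / D ^ (2 * k))"
    unfolding veronese_proj_def den gi gj ..
  also have "\<dots> = (A * A / c) * ((U * cnj U) ^ k * D ^ (2 * k)) / D ^ N * z ^ i * cnj z ^ j * (si * sj) * Ki * Kj"
    using D0 c0 by (simp add: field_simps power_mult_distrib)
  also have "\<dots> = of_nat (N choose k) * (z * cnj z) ^ k / D ^ N * z ^ i * cnj z ^ j * of_real (sqrt (real (N choose i) * real (N choose j))) * Ki * Kj"
    unfolding h2 h3 h4 ..
  finally show ?thesis unfolding D_def Ki_def Kj_def .
qed


theorem theorem3p1:
  fixes N :: nat and z :: complex
  assumes "N \<ge> 1" and "z \<noteq> 0"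
  defines "p \<equiv> Re (z * cnj z) / (1 + Re (z * cnj z))"
  shows "(\<forall>k\<le>N. \<forall>j\<le>N.
            veronese N k z j =
              of_real (fact N / fact (N - k)) * (- cnj z / (1 + z * cnj z)) ^ k
              * of_real (sqrt (real (N choose j))) * z ^ j * of_real (krawtchouk j k p N))
       \<and> (\<forall>k\<le>N. \<forall>i\<le>N. \<forall>j\<le>N.
            veronese_proj N k z i j =
              of_nat (N choose k) * (z * cnj z) ^ k / (1 + z * cnj z) ^ N
              * z ^ i * cnj z ^ j * of_real (sqrt (real (N choose i) * real (N choose j)))
              * of_real (krawtchouk i k p N) * of_real (krawtchouk j k p N))"
proof -
  have pe: "p = Re (z * cnj z) / (1 + Re (z * cnj z))" using p_def by simp
  show ?thesis
  proof (intro conjI allI impI)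
    fix k j assume k: "k \<le> N" and j: "j \<le> N"
    show "veronese N k z j =
              of_real (fact N / fact (N - k)) * (- cnj z / (1 + z * cnj z)) ^ k
              * of_real (sqrt (real (N choose j))) * z ^ j * of_real (krawtchouk j k p N)"
      using veronese_GG[OF k] GG_closed[OF assms(2) k j pe] by simp
  next
    fix k i j assume k: "k \<le> N" and i: "i \<le> N" and j: "j \<le> N"
    show "veronese_proj N k z i j =
              of_nat (N choose k) * (z * cnj z) ^ k / (1 + z * cnj z) ^ N
              * z ^ i * cnj z ^ j * of_real (sqrt (real (N choose i) * real (N choose j)))
              * of_real (krawtchouk i k p N) * of_real (krawtchouk j k p N)"
      by (rule proj_closed[OF assms(2) k i j pe])
  qed
qed

end
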